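(* Let $A$ be a densely defined closed operator in a complex Hilbert space $\mathcal{H}$ such that $\operatorname{Num}(A)$ has an interior point, $\operatorname{Num}(A)\neq\mathbb{C}$, $\operatorname{D}(A)\subset\operatorname{D}(A^* )$ and $\sigma(A)\subset\overline{\operatorname{Num}}(A)$. If $\lambda\in\partial\operatorname{Num}(A)$ is a point of unilateral infinite curvature of $\partial\overline{\operatorname{Num}}(A)$, then $\lambda\in\sigma_{ap}(A)$.
   Context: $\operatorname{Num}(A)=\{\langle Af,f\rangle: f\in\operatorname{D}(A),\|f\|=1\}$, $\overline{\operatorname{Num}}(A)$ its closure. Approximate point spectrum: $\sigma_{ap}(A)=\{\lambda\in\mathbb{C}:\exists (u_n)\subset\operatorname{D}(A),\ \|u_n\|=1,\ (A-\lambda)u_n\to0\}$. Curvature conventions. Let $\Omega\subset\mathbb{C}$ be a closed convex set with nonempty interior and $\lambda\in\partial\Omega$. There is at least one supporting line of $\Omega$ through $\lambda$; $\lambda$ is called a corner point if there is more than one. If $\lambda$ is a corner point, $\Omega$ lies in a closed sector with vertex $\lambda$ and semivertical angle $<\pi/2$; take the smallest such sector and let $l_\lambda$ be the supporting line through $\lambda$ orthogonal to the axis of this sector; otherwise $l_\lambda$ is the unique supporting line. Use rectangular coordinates $(\xi,\eta)$ with origin at $\lambda$, $\xi$-axis equal to $l_\lambda$, oriented so that $\Omega\subset\{\eta\ge 0\}$. Let $D'_\varepsilon=\{(\xi,\eta):\xi^2+\eta^2\le\varepsilon^2,\ \xi\neq 0\}$. Define $\gamma_u^+(\lambda)=\lim_{\varepsilon\downarrow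 0}\sup\{\eta/\xi^2:(\xi,\eta)\in\partial\Omega\cap D'_\varepsilon,\ \xi>0\}$ and $\gamma_l^+(\lambda)$ the same with $\inf$ in place of $\sup$; $\gamma_u^-(\lambda),\gamma_l^-(\lambda)$ are defined analogously with $\xi<0$. Set $\gamma_u(\lambda)=\max(\gamma_u^+(\lambda),\gamma_u^-(\lambda))$, $\gamma_l(\lambda)=\min(\gamma_l^+(\lambda),\gamma_l^-(\lambda))$. The point $\lambda$ is of infinite upper curvature if $\gamma_u(\lambda)=\infty$, and of unilateral infinite curvature if $\gamma_l^+(\lambda)=\infty$ or $\gamma_l^-(\lambda)=\infty$. For an operator $A$, these notions at $\lambda\in\partial\operatorname{Num}(A)$ refer to $\Omega=\overline{\operatorname{Num}}(A)$. *)

theory Defs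
  imports "HOL-Analysis.Analysis"
begin

class scaleC = scaleR +
  fixes scaleC :: "complex \<Rightarrow> 'a \<Rightarrow> 'a"
  assumes scaleR_scaleC: "scaleR r = scaleC (complex_of_real r)"

class complex_vector = scaleC + ab_group_add +
  assumes scaleC_add_right: "scaleC a (x + y) = scaleC a x + scaleC a y"
    and scaleC_add_left: "scaleC (a + b) x = scaleC a x + scaleC b x"
    and scaleC_scaleC: "scaleC a (scaleC b x) = scaleC (a * b) x"
    and scaleC_one: "scaleC 1 x = x"

section \<open>Complex inner product spaces (math convention: linear in the first argument)\<close>

class complex_inner = complex_vector + real_normed_vector +
  fixes cinner :: "'a \<Rightarrow> 'a \<Rightarrow> complex"
  assumes cinner_commute: "cinner x y = cnj (cinner y x)"
    and cinner_add_left: "cinner (x + y) z = cinner x z + cinner y z"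
    and cinner_scaleC_left: "cinner (scaleC r x) y = r * cinner x y"
    and cinner_self_real: "Im (cinner x x) = 0"
    and cinner_self_ge_zero: "0 \<le> Re (cinner x x)"
    and cinner_self_eq_zero_iff: "cinner x x = 0 \<longleftrightarrow> x = 0"
    and norm_eq_sqrt_cinner: "norm x = sqrt (Re (cinner x x))"

text \<open>A complex Hilbert space is a type of sort complex_inner together with complete_space.\<close>

definition lin_op :: "'a::complex_vector set \<Rightarrow> ('a \<Rightarrow> 'a) \<Rightarrow> bool" where
  "lin_op D A \<longleftrightarrow> 0 \<in> D \<and> (\<forall>x\<in>D. \<forall>y\<in>D. x + y \<in> D) \<and> (\<forall>c. \<forall>x\<in>D. scaleC c x \<in> D)
     \<and> (\<forall>x\<in>D. \<forall>y\<in>D. A (x + y) = A x + A y) \<and> (\<forall>c. \<forall>x\<in>D. A (scaleC c x) = scaleC c (A x))"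

definition densely_defined :: "'a::topological_space set \<Rightarrow> bool" where
  "densely_defined D \<longleftrightarrow> closure D = UNIV"

definition closed_op :: "'a::topological_space set \<Rightarrow> ('a \<Rightarrow> 'a) \<Rightarrow> bool" where
  "closed_op D A \<longleftrightarrow> closed {(x, A x) | x. x \<in> D}"

definition adj_dom :: "'a::complex_inner set \<Rightarrow> ('a \<Rightarrow> 'a) \<Rightarrow> 'a set" where
  "adj_dom D A = {g. \<exists>h. \<forall>f\<in>D. cinner (A f) g = cinner f h}"

definition num_range :: "'a::complex_inner set \<Rightarrow> ('a \<Rightarrow> 'a) \<Rightarrow> complex set" where
  "num_range D A = {cinner (A f) f | f. f \<in> D \<and> norm f = 1}"

definition resolvent_set :: "'a::complex_inner set \<Rightarrow> ('a \<Rightarrow> 'a) \<Rightarrow> complex set" where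
  "resolvent_set D A = {\<mu>. bij_betw (\<lambda>x. A x - scaleC \<mu> x) D UNIV
       \<and> (\<exists>C. \<forall>x\<in>D. norm x \<le> C * norm (A x - scaleC \<mu> x))}"

definition op_spectrum :: "'a::complex_inner set \<Rightarrow> ('a \<Rightarrow> 'a) \<Rightarrow> complex set" where
  "op_spectrum D A = - resolvent_set D A"

definition approx_point_spectrum :: "'a::{complex_inner,topological_space} set \<Rightarrow> ('a \<Rightarrow> 'a) \<Rightarrow> complex set" where
  "approx_point_spectrum D A = {\<mu>. \<exists>u::nat \<Rightarrow> 'a. (\<forall>n. u n \<in> D \<and> norm (u n) = 1)
       \<and> (\<lambda>n. A (u n) - scaleC \<mu> (u n)) \<longlonglongrightarrow> 0}"

definition supporting_line :: "complex set \<Rightarrow> complex \<Rightarrow> complex set \<Rightarrow> bool" where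
  "supporting_line \<Omega> c L \<longleftrightarrow> (\<exists>e. cmod e = 1 \<and> L = {c + of_real t * e | t. True}
      \<and> ((\<forall>z\<in>\<Omega>. 0 \<le> Im ((z - c) / e)) \<or> (\<forall>z\<in>\<Omega>. Im ((z - c) / e) \<le> 0)))"

definition corner_point :: "complex set \<Rightarrow> complex \<Rightarrow> bool" where
  "corner_point \<Omega> c \<longleftrightarrow> (\<exists>L1 L2. supporting_line \<Omega> c L1 \<and> supporting_line \<Omega> c L2 \<and> L1 \<noteq> L2)"

text \<open>Closed sector with vertex c, unit axis direction d and semivertical angle \<alpha> (0 < \<alpha> < pi/2):
  the points z with |arg((z-c)/d)| \<le> \<alpha>, together with c.\<close>
definition sector :: "complex \<Rightarrow> complex \<Rightarrow> real \<Rightarrow> complex set" where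
  "sector c d \<alpha> = {z. cmod (z - c) * cos \<alpha> \<le> Re ((z - c) / d)}"

definition min_sector :: "complex set \<Rightarrow> complex \<Rightarrow> complex \<Rightarrow> real \<Rightarrow> bool" where
  "min_sector \<Omega> c d \<alpha> \<longleftrightarrow> cmod d = 1 \<and> 0 < \<alpha> \<and> \<alpha> < pi / 2 \<and> \<Omega> \<subseteq> sector c d \<alpha>
     \<and> (\<forall>d' \<alpha>'. cmod d' = 1 \<and> 0 < \<alpha>' \<and> \<alpha>' < pi / 2 \<and> \<Omega> \<subseteq> sector c d' \<alpha>' \<longrightarrow> \<alpha> \<le> \<alpha>')"

text \<open>e is the unit direction of the oriented xi-axis l_c; coordinates of z are
  xi + i eta = (z - c) / e, and \<Omega> lies in {eta \<ge> 0}.\<close>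
definition curv_frame :: "complex set \<Rightarrow> complex \<Rightarrow> complex \<Rightarrow> bool" where
  "curv_frame \<Omega> c e \<longleftrightarrow> cmod e = 1 \<and> (\<forall>z\<in>\<Omega>. 0 \<le> Im ((z - c) / e))
     \<and> (corner_point \<Omega> c \<longrightarrow> (\<exists>d \<alpha>. min_sector \<Omega> c d \<alpha> \<and> Re (e * cnj d) = 0))"

definition gamma_l_plus :: "complex set \<Rightarrow> complex \<Rightarrow> complex \<Rightarrow> ereal" where
  "gamma_l_plus \<Omega> c e = Lim (at_right (0::real)) (\<lambda>\<epsilon>.
      INF w \<in> {w. c + e * w \<in> frontier \<Omega> \<and> cmod w \<le> \<epsilon> \<and> Re w \<noteq> 0 \<and> Re w > 0}.
        ereal (Im w / (Re w)\<^sup>2))"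

definition gamma_l_minus :: "complex set \<Rightarrow> complex \<Rightarrow> complex \<Rightarrow> ereal" where
  "gamma_l_minus \<Omega> c e = Lim (at_right (0::real)) (\<lambda>\<epsilon>.
      INF w \<in> {w. c + e * w \<in> frontier \<Omega> \<and> cmod w \<le> \<epsilon> \<and> Re w \<noteq> 0 \<and> Re w < 0}.
        ereal (Im w / (Re w)\<^sup>2))"

definition unilateral_infinite_curvature :: "complex set \<Rightarrow> complex \<Rightarrow> bool" where
  "unilateral_infinite_curvature \<Omega> c \<longleftrightarrow> (\<exists>e. curv_frame \<Omega> c e
      \<and> (gamma_l_plus \<Omega> c e = \<infinity> \<or> gamma_l_minus \<Omega> c e = \<infinity>))"

end

theory Submission
  imports Defs
begin


lemma scaleC_zero_right[simp]: "scaleC a (0::'a::complex_vector) = 0"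
proof -
  have "scaleC a (0::'a) = scaleC a (0 + 0)" by simp
  also have "\<dots> = scaleC a 0 + scaleC a 0" by (rule scaleC_add_right)
  finally show ?thesis by simp
qed

lemma scaleC_zero_left[simp]: "scaleC 0 (x::'a::complex_vector) = 0"
proof -
  have "scaleC 0 x = scaleC (0 + 0) x" by simp
  also have "\<dots> = scaleC 0 x + scaleC 0 x" by (rule scaleC_add_left)
  finally show ?thesis by simp
qed

lemma scaleC_minus_right: "scaleC a (- (x::'a::complex_vector)) = - scaleC a x"
proof -
  have "scaleC a (- x) + scaleC a x = scaleC a (- x + x)" by (rule scaleC_add_right[symmetric])
  also have "\<dots> = 0" by simp
  finally show ?thesis by (simp add: add_eq_0_iff2)
qed

lemma scaleC_diff_right: "scaleC a ((x::'a::complex_vector) - y) = scaleC a x - scaleC a y"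
  by (simp only: diff_conv_add_uminus scaleC_add_right scaleC_minus_right)

lemma scaleC_minus_left: "scaleC (- a) (x::'a::complex_vector) = - scaleC a x"
proof -
  have "scaleC (- a) x + scaleC a x = scaleC (- a + a) x" by (rule scaleC_add_left[symmetric])
  also have "\<dots> = 0" by simp
  finally show ?thesis by (simp add: add_eq_0_iff2)
qed

lemma scaleC_diff_left: "scaleC (a - b) (x::'a::complex_vector) = scaleC a x - scaleC b x"
  by (simp only: diff_conv_add_uminus scaleC_add_left scaleC_minus_left)

lemma cinner_zero_left[simp]: "cinner (0::'a::complex_inner) y = 0"
proof -
  have "cinner (0::'a) y = cinner (0 + 0) y" by simp
  also have "\<dots> = cinner 0 y + cinner 0 y" by (rule cinner_add_left)
  finally show ?thesis by simp
qed

lemma cinner_minus_left: "cinner (- (x::'a::complex_inner)) y = - cinner x y"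
proof -
  have "cinner (- x) y + cinner x y = cinner (- x + x) y" by (rule cinner_add_left[symmetric])
  also have "\<dots> = 0" by simp
  finally show ?thesis by (simp add: add_eq_0_iff2)
qed

lemma cinner_diff_left: "cinner ((x::'a::complex_inner) - z) y = cinner x y - cinner z y"
  by (simp only: diff_conv_add_uminus cinner_add_left cinner_minus_left)

lemma cinner_add_right: "cinner (x::'a::complex_inner) (y + z) = cinner x y + cinner x z"
proof -
  have "cinner x (y + z) = cnj (cinner (y + z) x)" by (rule cinner_commute)
  also have "\<dots> = cnj (cinner y x) + cnj (cinner z x)" by (simp only: cinner_add_left complex_cnj_add)
  also have "\<dots> = cinner x y + cinner x z" by (simp only: cinner_commute[of x y, symmetric] cinner_commute[of x z, symmetric])
  finally show ?thesis .
qed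

lemma cinner_scaleC_right: "cinner (x::'a::complex_inner) (scaleC r y) = cnj r * cinner x y"
proof -
  have "cinner x (scaleC r y) = cnj (cinner (scaleC r y) x)" by (rule cinner_commute)
  also have "\<dots> = cnj r * cnj (cinner y x)" by (simp only: cinner_scaleC_left complex_cnj_mult)
  also have "\<dots> = cnj r * cinner x y" by (simp only: cinner_commute[of x y, symmetric])
  finally show ?thesis .
qed

lemma cinner_zero_right[simp]: "cinner (x::'a::complex_inner) 0 = 0"
proof -
  have "cinner x 0 = cnj (cinner 0 x)" by (rule cinner_commute)
  thus ?thesis by simp
qed

lemma cinner_diff_right: "cinner (x::'a::complex_inner) (y - z) = cinner x y - cinner x z"
proof -
  have "cinner x (y - z) = cnj (cinner (y - z) x)" by (rule cinner_commute)
  also have "\<dots> = cnj (cinner y x) - cnj (cinner z x)" by (simp only: cinner_diff_left complex_cnj_diff)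
  also have "\<dots> = cinner x y - cinner x z" by (simp only: cinner_commute[of x y, symmetric] cinner_commute[of x z, symmetric])
  finally show ?thesis .
qed

lemma cinner_self: "cinner (x::'a::complex_inner) x = complex_of_real ((norm x)^2)"
proof -
  have "(norm x)^2 = Re (cinner x x)" using norm_eq_sqrt_cinner[of x] cinner_self_ge_zero[of x] by simp
  thus ?thesis using cinner_self_real[of x] by (simp add: complex_eq_iff)
qed

lemma norm_scaleC: "norm (scaleC c (x::'a::complex_inner)) = cmod c * norm x"
proof -
  have "(norm (scaleC c x))^2 = (cmod c * norm x)^2"
  proof -
    have "cinner (scaleC c x) (scaleC c x) = c * cnj c * cinner x x"
      by (simp add: cinner_scaleC_left cinner_scaleC_right)
    hence "complex_of_real ((norm (scaleC c x))^2) = c * cnj c * complex_of_real ((norm x)^2)"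
      by (simp only: cinner_self)
    also have "c * cnj c = complex_of_real ((cmod c)^2)" by (metis complex_norm_square)
    finally have "complex_of_real ((norm (scaleC c x))^2) = complex_of_real ((cmod c)^2 * (norm x)^2)" by simp
    thus ?thesis by (simp only: of_real_eq_iff power_mult_distrib)
  qed
  thus ?thesis by (simp add: power2_eq_iff_nonneg)
qed

lemma alg_cs: "Y > 0 \<Longrightarrow> complex_of_real X - cnj p / complex_of_real Y * p - p / complex_of_real Y * cnj p
   + p / complex_of_real Y * (cnj p / complex_of_real Y) * complex_of_real Y
   = complex_of_real X - p * cnj p / complex_of_real Y"
proof -
  assume "Y > 0"
  hence nz: "complex_of_real Y \<noteq> 0" by simp
  have "p / complex_of_real Y * (cnj p / complex_of_real Y) * complex_of_real Y = p * cnj p / complex_of_real Y"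
    using nz by (simp add: divide_simps)
  thus ?thesis by (simp add: algebra_simps)
qed

lemma cauchy_schwarz_c: "cmod (cinner (x::'a::complex_inner) y) \<le> norm x * norm y"
proof (cases "y = 0")
  case True thus ?thesis by simp
next
  case False
  define Y where "Y = (norm y)^2"
  have Ypos: "Y > 0" using False by (simp add: Y_def)
  define t where "t = cinner x y / complex_of_real Y"
  have "0 \<le> Re (cinner (x - scaleC t y) (x - scaleC t y))" by (rule cinner_self_ge_zero)
  also have "cinner (x - scaleC t y) (x - scaleC t y) =
      cinner x x - cnj t * cinner x y - t * cinner y x + t * cnj t * cinner y y"
    by (simp add: cinner_diff_left cinner_diff_right cinner_scaleC_left cinner_scaleC_right algebra_simps)
  also have "\<dots> = complex_of_real ((norm x)^2 - (cmod (cinner x y))^2 / Y)"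
  proof -
    have yy: "cinner y y = complex_of_real Y" by (simp add: Y_def cinner_self)
    have yx: "cinner y x = cnj (cinner x y)" by (rule cinner_commute)
    have cc: "cinner x y * cnj (cinner x y) = complex_of_real ((cmod (cinner x y))^2)"
      by (metis complex_norm_square)
    have cy: "cnj (complex_of_real Y) = complex_of_real Y" by simp
    have "cinner x x - cnj t * cinner x y - t * cinner y x + t * cnj t * cinner y y
      = complex_of_real ((norm x)^2) - cinner x y * cnj (cinner x y) / complex_of_real Y"
      unfolding t_def yy yx cinner_self[of x] complex_cnj_divide cy
      by (rule alg_cs[OF Ypos])
    also have "\<dots> = complex_of_real ((norm x)^2 - (cmod (cinner x y))^2 / Y)"
      unfolding cc of_real_diff of_real_divide ..
    finally show ?thesis .
  qed
  finally have "(cmod (cinner x y))^2 / Y \<le> (norm x)^2" by simp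
  hence "(cmod (cinner x y))^2 \<le> (norm x)^2 * Y" using Ypos by (simp add: divide_le_eq)
  hence "(cmod (cinner x y))^2 \<le> (norm x * norm y)^2" by (simp add: Y_def power_mult_distrib)
  thus ?thesis by (rule power2_le_imp_le) simp
qed



lemma lim_infty_extract:
  fixes S :: "real \<Rightarrow> complex set" and f :: "complex \<Rightarrow> ereal"
  assumes mono: "\<And>e1 e2. e1 \<le> e2 \<Longrightarrow> S e1 \<subseteq> S e2"
    and lim: "Lim (at_right (0::real)) (\<lambda>\<epsilon>. INF w \<in> S \<epsilon>. f w) = \<infinity>"
  shows "\<exists>\<epsilon>>0. \<forall>w\<in>S \<epsilon>. ereal K < f w"
proof -
  define g where "g = (\<lambda>\<epsilon>. INF w \<in> S \<epsilon>. f w)"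
  have gmono: "g e2 \<le> g e1" if "e1 \<le> e2" for e1 e2
    unfolding g_def using mono[OF that] by (rule INF_superset_mono) simp
  define L where "L = (SUP \<epsilon>\<in>{0<..}. g \<epsilon>)"
  have "(g \<longlongrightarrow> L) (at_right 0)"
  proof (rule order_tendstoI)
    fix a assume "a < L"
    then obtain e0 where e0: "e0 \<in> {0<..}" "a < g e0" unfolding L_def by (auto simp: less_SUP_iff)
    have "eventually (\<lambda>x. x < e0) (at_right (0::real))"
      using e0(1) by (auto simp add: eventually_at_right)
    thus "eventually (\<lambda>x. a < g x) (at_right 0)"
      by eventually_elim (use e0 gmono in \<open>auto intro: less_le_trans\<close>)
  next
    fix a assume "L < a"
    have "eventually (\<lambda>x. x > 0) (at_right (0::real))" by (simp add: eventually_at_right_less)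
    thus "eventually (\<lambda>x. g x < a) (at_right 0)"
    proof eventually_elim
      case (elim x)
      hence "g x \<le> L" unfolding L_def by (intro SUP_upper) auto
      thus ?case using \<open>L < a\<close> by simp
    qed
  qed
  hence "Lim (at_right 0) g = L" by (intro tendsto_Lim) simp_all
  hence "L = \<infinity>" using lim by (simp add: g_def)
  hence "ereal K < L" by simp
  then obtain e0 where e0: "e0 \<in> {0<..}" "ereal K < g e0" unfolding L_def by (auto simp: less_SUP_iff)
  show ?thesis
  proof (intro exI[of _ e0] conjI ballI)
    show "0 < e0" using e0 by simp
    fix w assume "w \<in> S e0"
    hence "g e0 \<le> f w" unfolding g_def by (rule INF_lower)
    thus "ereal K < f w" using e0 by simp
  qed
qed



lemma frontier_below:
  fixes \<Omega> :: "complex set"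
  assumes cl: "closed \<Omega>" and e: "cmod e = 1" and half: "\<forall>z\<in>\<Omega>. 0 \<le> Im ((z - c) / e)"
    and p: "p \<in> \<Omega>"
  shows "\<exists>w. c + e * w \<in> frontier \<Omega> \<and> Re w = Re ((p - c) / e) \<and> 0 \<le> Im w \<and> Im w \<le> Im ((p - c) / e)"
proof -
  define W where "W = (p - c) / e"
  have e0: "e \<noteq> 0" using e by auto
  have pW: "p = c + e * W" using e0 by (simp add: W_def)
  have ImW: "0 \<le> Im W" using half p by (simp add: W_def)
  define P0 where "P0 = c + e * Complex (Re W) (-1)"
  have "P0 \<notin> \<Omega>"
  proof
    assume "P0 \<in> \<Omega>"
    hence "0 \<le> Im ((P0 - c) / e)" using half by blast
    thus False using e0 by (simp add: P0_def)
  qed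
  have "closed_segment P0 p \<inter> frontier \<Omega> \<noteq> {}"
    by (rule connected_Int_frontier) (use p \<open>P0 \<notin> \<Omega>\<close> in auto)
  then obtain x where x: "x \<in> closed_segment P0 p" "x \<in> frontier \<Omega>" by blast
  then obtain u where u: "0 \<le> u" "u \<le> 1" "x = (1 - u) *\<^sub>R P0 + u *\<^sub>R p" by (auto simp: in_segment)
  define w where "w = Complex (Re W) (u * Im W - (1 - u))"
  have xw: "x = c + e * w"
    unfolding u(3) P0_def pW w_def scaleR_conv_of_real
    by (simp add: complex_eq_iff algebra_simps)
  have "x \<in> \<Omega>" using x(2) cl by (metis closure_closed frontier_def DiffD1)
  hence "0 \<le> Im ((c + e * w - c) / e)" using half xw by blast
  hence "0 \<le> Im w" using e0 by simp
  moreover have "Im w \<le> Im W" unfolding w_def using u ImW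
    by (simp add: mult_left_le_one_le algebra_simps) (smt (verit) mult_left_le_one_le)
  ultimately show ?thesis using x(2) xw by (auto simp: W_def w_def)
qed



lemma disc_bound:
  fixes p q r t :: real
  assumes "t > 0" "0 \<le> p + t * q + t^2 * r" "0 \<le> p - t * q + t^2 * r"
    "p \<le> t^2" "r \<le> R0"
  shows "\<bar>q\<bar> \<le> t * (1 + R0)"
proof -
  have "t * \<bar>q\<bar> \<le> p + t^2 * r" using assms(2,3) by (cases "q \<ge> 0") auto
  also have "\<dots> \<le> t^2 + t^2 * R0" using assms(4,5) \<open>t>0\<close> by (simp add: add_mono)
  also have "\<dots> = t * (t * (1 + R0))" by (simp add: power2_eq_square algebra_simps)
  finally show ?thesis using \<open>t > 0\<close> by simp
qed

lemma core_num:
  fixes z0 a b d :: complex and t M R0 \<sigma> :: real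
  assumes sig: "\<sigma> = 1 \<or> \<sigma> = -1" and t: "t > 0" "t \<le> 1"
    and z0: "cmod z0 \<le> t^2" and b: "cmod (b - 1) \<le> t * M" and d: "cmod d \<le> R0"
    and M: "M \<ge> 0"
    and h1: "\<forall>s\<in>{t,-t}. 0 \<le> Im z0 + s * Im (a + b) + s^2 * Im d"
    and h2: "\<forall>s\<in>{t,-t}. 0 \<le> Im z0 + s * (Re b - Re a) + s^2 * Im d"
    and small: "t * (2 + 2 * R0 + 2 * M) \<le> 1"
  defines "Q \<equiv> z0 + complex_of_real (\<sigma> * t) * (a + b) + complex_of_real (t^2) * d"
  shows "t \<le> \<sigma> * Re Q" "Im Q \<le> (2 + 2 * R0) * t^2" "\<bar>Re Q\<bar> \<le> 3 * t"
proof -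
  have Iz: "\<bar>Im z0\<bar> \<le> t^2" using abs_Im_le_cmod[of z0] z0 by linarith
  have Rz: "\<bar>Re z0\<bar> \<le> t^2" using abs_Re_le_cmod[of z0] z0 by linarith
  have Id: "\<bar>Im d\<bar> \<le> R0" using abs_Im_le_cmod[of d] d by linarith
  have Rd: "\<bar>Re d\<bar> \<le> R0" using abs_Re_le_cmod[of d] d by linarith
  have Rb: "\<bar>Re b - 1\<bar> \<le> t * M" using abs_Re_le_cmod[of "b - 1"] b by simp
  have A1: "\<bar>Im (a + b)\<bar> \<le> t * (1 + R0)"
    using h1 Iz Id t by (intro disc_bound[of t "Im z0" _ "Im d"]) auto
  have A2: "\<bar>Re b - Re a\<bar> \<le> t * (1 + R0)"
    using h2 Iz Id t by (intro disc_bound[of t "Im z0" _ "Im d"]) auto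
  have Rab: "\<bar>Re (a + b) - 2\<bar> \<le> t * (1 + R0 + 2 * M)"
    using A2 Rb by (simp add: abs_le_iff algebra_simps)
  have ReQ: "Re Q = Re z0 + \<sigma> * t * Re (a + b) + t^2 * Re d" by (simp add: Q_def)
  have ImQ: "Im Q = Im z0 + \<sigma> * t * Im (a + b) + t^2 * Im d" by (simp add: Q_def)
  have tt: "t^2 \<le> t" using t by (simp add: power2_eq_square mult_left_le_one_le)
  have s2: "\<sigma>^2 = 1" using sig by auto
  have "\<sigma> * Re Q = \<sigma> * Re z0 + t * Re (a + b) + \<sigma> * t^2 * Re d"
    using sig by (auto simp: ReQ algebra_simps)
  also have "\<dots> \<ge> - (t^2) + t * (2 - t * (1 + R0 + 2 * M)) - t^2 * R0"
  proof -
    have "\<sigma> * Re z0 \<ge> - (t^2)" using Rz sig by auto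
    moreover have "t * Re (a + b) \<ge> t * (2 - t * (1 + R0 + 2 * M))"
      using Rab t by (intro mult_left_mono) (auto simp: abs_le_iff)
    moreover have "\<sigma> * t^2 * Re d \<ge> - (t^2 * R0)"
    proof -
      have "\<bar>\<sigma> * t^2 * Re d\<bar> \<le> t^2 * R0" using sig Rd by (auto simp: abs_mult intro!: mult_left_mono)
      thus ?thesis by linarith
    qed
    ultimately show ?thesis by linarith
  qed
  finally have "\<sigma> * Re Q \<ge> 2 * t - t * (t * (2 + 2 * R0 + 2 * M))"
    by (simp add: power2_eq_square algebra_simps)
  moreover have "t * (t * (2 + 2 * R0 + 2 * M)) \<le> t * 1" using small t by (intro mult_left_mono) auto
  ultimately show "t \<le> \<sigma> * Re Q" by linarith
  have "Im Q \<le> t^2 + t * (t * (1 + R0)) + t^2 * R0"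
  proof -
    have "\<sigma> * t * Im (a + b) \<le> t * (t * (1 + R0))"
    proof -
      have "\<bar>\<sigma> * t * Im (a + b)\<bar> \<le> t * (t * (1 + R0))" using sig A1 t by (auto simp: abs_mult intro: mult_left_mono)
      thus ?thesis by linarith
    qed
    moreover have "t^2 * Im d \<le> t^2 * R0" using Id by (intro mult_left_mono) auto
    ultimately show ?thesis using Iz unfolding ImQ by linarith
  qed
  thus "Im Q \<le> (2 + 2 * R0) * t^2" by (simp add: power2_eq_square algebra_simps)
  have "\<bar>Re Q\<bar> \<le> t^2 + t * (2 + t * (1 + R0 + 2 * M)) + t^2 * R0"
  proof -
    have "\<bar>\<sigma> * t * Re (a + b)\<bar> \<le> t * (2 + t * (1 + R0 + 2 * M))"
      using sig Rab t by (auto simp: abs_mult abs_le_iff intro!: mult_left_mono)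
    moreover have "\<bar>t^2 * Re d\<bar> \<le> t^2 * R0" using Rd by (simp add: abs_mult mult_left_mono)
    ultimately show ?thesis using Rz unfolding ReQ by linarith
  qed
  also have "\<dots> = 2 * t + t * (t * (2 + 2 * R0 + 2 * M))" by (simp add: power2_eq_square algebra_simps)
  also have "\<dots> \<le> 2 * t + t * 1" using small t by (intro add_left_mono mult_left_mono) auto
  finally show "\<bar>Re Q\<bar> \<le> 3 * t" by simp
qed



lemma cinner_expand:
  fixes x y x' y' :: "'a::complex_inner"
  shows "cinner (x + scaleC \<zeta> y) (x' + scaleC \<zeta> y') =
    cinner x x' + cnj \<zeta> * cinner x y' + \<zeta> * cinner y x' + \<zeta> * cnj \<zeta> * cinner y y'"
  by (simp add: cinner_add_left cinner_add_right cinner_scaleC_left cinner_scaleC_right algebra_simps)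

theorem mainTheorem4:
  fixes D :: "'a::{complex_inner, complete_space} set"
    and A :: "'a \<Rightarrow> 'a"
    and lam :: complex
  assumes "lin_op D A"
    and "densely_defined D"
    and "closed_op D A"
    and "interior (num_range D A) \<noteq> {}"
    and "num_range D A \<noteq> UNIV"
    and "D \<subseteq> adj_dom D A"
    and "op_spectrum D A \<subseteq> closure (num_range D A)"
    and "lam \<in> frontier (num_range D A)"
    and "unilateral_infinite_curvature (closure (num_range D A)) lam"
  shows "lam \<in> approx_point_spectrum D A"
proof (rule ccontr)
  assume nap: "lam \<notin> approx_point_spectrum D A"
  define \<Omega> where "\<Omega> = closure (num_range D A)"
  have lin: "0 \<in> D" "\<And>x y. x \<in> D \<Longrightarrow> y \<in> D \<Longrightarrow> x + y \<in> D" "\<And>c x. x \<in> D \<Longrightarrow> scaleC c x \<in> D"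
    "\<And>x y. x \<in> D \<Longrightarrow> y \<in> D \<Longrightarrow> A (x + y) = A x + A y"
    "\<And>c x. x \<in> D \<Longrightarrow> A (scaleC c x) = scaleC c (A x)"
    using assms(1) unfolding lin_op_def by auto
  define L where "L = (\<lambda>x. A x - scaleC lam x)"
  have L_add: "L (x + y) = L x + L y" if "x \<in> D" "y \<in> D" for x y
    using that lin(4) by (simp add: L_def scaleC_add_right algebra_simps)
  have L_scale: "L (scaleC r x) = scaleC r (L x)" if "x \<in> D" for r x
    using that lin(5) by (simp add: L_def scaleC_diff_right scaleC_scaleC mult.commute)
  obtain c where c: "c > 0" "\<And>x. x \<in> D \<Longrightarrow> c * norm x \<le> norm (L x)"
  proof -
    have "\<exists>c>0. \<forall>x\<in>D. c * norm x \<le> norm (L x)"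
    proof (rule ccontr)
      assume "\<not> ?thesis"
      hence "\<forall>n::nat. \<exists>x\<in>D. norm (L x) < (1 / real (Suc n)) * norm x"
        by (metis not_le of_nat_0_less_iff zero_less_Suc divide_pos_pos zero_less_one)
      then obtain x where x: "\<And>n. x n \<in> D" "\<And>n. norm (L (x n)) < (1 / real (Suc n)) * norm (x n)"
        by metis
      define u where "u n = scaleC (complex_of_real (1 / norm (x n))) (x n)" for n
      have xnz: "x n \<noteq> 0" for n
      proof
        assume "x n = 0" thus False using x(2)[of n] by simp
      qed
      have uD: "u n \<in> D" for n using lin(3) x(1) by (simp add: u_def)
      have un: "norm (u n) = 1" for n using xnz by (simp add: u_def norm_scaleC norm_divide)
      have "norm (L (u n)) < 1 / real (Suc n)" for n
      proof -
        have "norm (L (u n)) = norm (L (x n)) / norm (x n)"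
          using x(1) by (simp add: u_def L_scale norm_scaleC norm_divide)
        also have "\<dots> < 1 / real (Suc n)" using x(2)[of n] xnz by (simp add: divide_less_eq)
        finally show ?thesis .
      qed
      hence "(\<lambda>n. L (u n)) \<longlonglongrightarrow> 0" by (rule LIMSEQ_norm_0)
      hence "lam \<in> approx_point_spectrum D A"
        unfolding approx_point_spectrum_def L_def using uD un by blast
      thus False using nap by simp
    qed
    thus ?thesis using that by blast
  qed
  obtain e where cf: "curv_frame \<Omega> lam e"
    and g: "gamma_l_plus \<Omega> lam e = \<infinity> \<or> gamma_l_minus \<Omega> lam e = \<infinity>"
    using assms(9) unfolding unilateral_infinite_curvature_def \<Omega>_def by blast
  have e1: "cmod e = 1" and half: "\<forall>z\<in>\<Omega>. 0 \<le> Im ((z - lam) / e)"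
    using cf unfolding curv_frame_def by auto
  have e0: "e \<noteq> 0" using e1 by auto
  obtain \<sigma> :: real where sig: "\<sigma> = 1 \<or> \<sigma> = -1"
    and curv: "\<And>K. \<exists>\<delta>>0. \<forall>w. lam + e * w \<in> frontier \<Omega> \<and> cmod w \<le> \<delta> \<and> 0 < \<sigma> * Re w
                 \<longrightarrow> K < Im w / (Re w)^2"
  proof (cases "gamma_l_plus \<Omega> lam e = \<infinity>")
    case True
    have "\<exists>\<delta>>0. \<forall>w. lam + e * w \<in> frontier \<Omega> \<and> cmod w \<le> \<delta> \<and> 0 < 1 * Re w
                 \<longrightarrow> K < Im w / (Re w)^2" for K
    proof -
      obtain \<epsilon> where "\<epsilon> > 0" and h: "\<forall>w\<in>{w. lam + e * w \<in> frontier \<Omega> \<and> cmod w \<le> \<epsilon> \<and> Re w \<noteq> 0 \<and> Re w > 0}.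
          ereal K < ereal (Im w / (Re w)\<^sup>2)"
        by (rule lim_infty_extract[where S="\<lambda>\<epsilon>. {w. lam + e * w \<in> frontier \<Omega> \<and> cmod w \<le> \<epsilon> \<and> Re w \<noteq> 0 \<and> Re w > 0}"
           and f="\<lambda>w. ereal (Im w / (Re w)\<^sup>2)" and K=K, THEN exE])
           (use True in \<open>auto simp: gamma_l_plus_def\<close>)
      thus ?thesis by (intro exI[of _ \<epsilon>]) auto
    qed
    thus ?thesis using that[of 1] by simp
  next
    case False
    hence gm: "gamma_l_minus \<Omega> lam e = \<infinity>" using g by simp
    have "\<exists>\<delta>>0. \<forall>w. lam + e * w \<in> frontier \<Omega> \<and> cmod w \<le> \<delta> \<and> 0 < (-1) * Re w
                 \<longrightarrow> K < Im w / (Re w)^2" for K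
    proof -
      obtain \<epsilon> where "\<epsilon> > 0" and h: "\<forall>w\<in>{w. lam + e * w \<in> frontier \<Omega> \<and> cmod w \<le> \<epsilon> \<and> Re w \<noteq> 0 \<and> Re w < 0}.
          ereal K < ereal (Im w / (Re w)\<^sup>2)"
        by (rule lim_infty_extract[where S="\<lambda>\<epsilon>. {w. lam + e * w \<in> frontier \<Omega> \<and> cmod w \<le> \<epsilon> \<and> Re w \<noteq> 0 \<and> Re w < 0}"
           and f="\<lambda>w. ereal (Im w / (Re w)\<^sup>2)" and K=K, THEN exE])
           (use gm in \<open>auto simp: gamma_l_minus_def\<close>)
      thus ?thesis by (intro exI[of _ \<epsilon>]) auto
    qed
    thus ?thesis using that[of "-1"] by simp
  qed
  define M where "M = 2 / c"
  define R0 where "R0 = M + M^2"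
  have Mpos: "M > 0" using c by (simp add: M_def)
  have R0pos: "R0 \<ge> 0" using Mpos by (simp add: R0_def)
  obtain \<delta> where \<delta>: "\<delta> > 0" "\<And>w. lam + e * w \<in> frontier \<Omega> \<Longrightarrow> cmod w \<le> \<delta> \<Longrightarrow> 0 < \<sigma> * Re w
                 \<Longrightarrow> 6 * (1 + R0) < Im w / (Re w)^2"
    using curv[of "6 * (1 + R0)"] by blast
  define t where "t = min (min 1 (c / 2)) (min (1 / (4 * M)) (min (1 / (2 + 2 * R0 + 2 * M)) (\<delta> / (10 + 4 * R0))))"
  have tpos: "t > 0" using c Mpos R0pos \<delta> by (simp add: t_def)
  have t1: "t \<le> 1" "t \<le> c / 2" unfolding t_def
    by (rule min.coboundedI1, rule min.cobounded1) (rule min.coboundedI1, rule min.cobounded2)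
  have tM: "t * M \<le> 1 / 4"
  proof -
    have "t \<le> 1 / (4 * M)" unfolding t_def by (rule min.coboundedI2, rule min.cobounded1)
    thus ?thesis using Mpos by (simp add: field_simps)
  qed
  have tsmall: "t * (2 + 2 * R0 + 2 * M) \<le> 1"
  proof -
    have "t \<le> 1 / (2 + 2 * R0 + 2 * M)" unfolding t_def by (rule min.coboundedI2, rule min.coboundedI2, rule min.cobounded1)
    thus ?thesis using Mpos R0pos by (simp add: field_simps)
  qed
  have tdelta: "(10 + 4 * R0) * t \<le> \<delta>"
  proof -
    have "t \<le> \<delta> / (10 + 4 * R0)" unfolding t_def by (rule min.coboundedI2, rule min.coboundedI2, rule min.cobounded2)
    thus ?thesis using R0pos by (simp add: field_simps)
  qed
  have L0: "L 0 = 0" using lin(5)[of 0 0] lin(1) by (simp add: L_def)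
  define q where "q v = cinner (L v) v / e" for v
  have numpt: "\<exists>z\<in>num_range D A. (z - lam) / e = q v / complex_of_real ((norm v)^2)"
    if vD: "v \<in> D" and vnz: "v \<noteq> 0" for v
  proof -
    define r where "r = complex_of_real (1 / norm v)"
    define v' where "v' = scaleC r v"
    have v'D: "v' \<in> D" using lin(3) vD by (simp add: v'_def)
    have nv': "norm v' = 1" using vnz by (simp add: v'_def r_def norm_scaleC norm_divide)
    have z: "cinner (A v') v' \<in> num_range D A" unfolding num_range_def using v'D nv' by blast
    have "cinner (A v') v' - lam = cinner (L v') v'"
      using nv' by (simp add: L_def cinner_diff_left cinner_scaleC_left cinner_self)
    also have "\<dots> = r * cnj r * cinner (L v) v"
      using vD by (simp add: v'_def L_scale cinner_scaleC_left cinner_scaleC_right)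
    also have "r * cnj r = 1 / complex_of_real ((norm v)^2)"
      by (simp add: r_def power2_eq_square)
    finally have "cinner (A v') v' - lam = cinner (L v) v / complex_of_real ((norm v)^2)" by simp
    hence "(cinner (A v') v' - lam) / e = q v / complex_of_real ((norm v)^2)"
      by (simp add: q_def)
    thus ?thesis using z by blast
  qed
  have Imq: "0 \<le> Im (q v)" if vD: "v \<in> D" for v
  proof (cases "v = 0")
    case True thus ?thesis by (simp add: q_def)
  next
    case False
    then obtain z where z: "z \<in> num_range D A" "(z - lam) / e = q v / complex_of_real ((norm v)^2)"
      using numpt vD by blast
    have "z \<in> \<Omega>" using z(1) closure_subset unfolding \<Omega>_def by blast
    hence "0 \<le> Im ((z - lam) / e)" using half by blast
    hence "0 \<le> Im (q v) / (norm v)^2" using z(2) by (simp add: Im_divide_of_real)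
    thus ?thesis using False by (simp add: zero_le_divide_iff)
  qed
  have "lam \<in> closure (num_range D A)" using assms(8) unfolding frontier_def by blast
  then obtain z1 where z1: "z1 \<in> num_range D A" "dist z1 lam < t^2"
    using tpos unfolding closure_approachable by (metis zero_less_power)
  then obtain u where u: "u \<in> D" "norm u = 1" "z1 = cinner (A u) u"
    unfolding num_range_def by blast
  have uu: "cinner u u = 1" using u(2) by (simp add: cinner_self)
  define z0 where "z0 = q u"
  have z0eq: "z0 = (z1 - lam) / e"
    using u uu by (simp add: z0_def q_def L_def cinner_diff_left cinner_scaleC_left)
  have z0b: "cmod z0 \<le> t^2"
    using z1(2) e1 by (simp add: z0eq norm_divide dist_norm)
  define \<mu> where "\<mu> = lam - \<i> * complex_of_real t * e"
  have mul: "(\<mu> - lam) / e = - \<i> * complex_of_real t" using e0 by (simp add: \<mu>_def)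
  have cmu: "cmod (\<mu> - lam) = t" using e1 tpos by (simp add: \<mu>_def norm_mult)
  have "\<mu> \<notin> \<Omega>"
  proof
    assume "\<mu> \<in> \<Omega>"
    hence "0 \<le> Im ((\<mu> - lam) / e)" using half by blast
    thus False using mul tpos by simp
  qed
  hence "\<mu> \<in> resolvent_set D A" using assms(7) unfolding op_spectrum_def \<Omega>_def by blast
  hence "bij_betw (\<lambda>x. A x - scaleC \<mu> x) D UNIV" unfolding resolvent_set_def by blast
  hence "scaleC e u \<in> (\<lambda>x. A x - scaleC \<mu> x) ` D" by (simp add: bij_betw_def)
  then obtain w where wD: "w \<in> D" and wA: "A w - scaleC \<mu> w = scaleC e u" by (auto simp: image_iff)
  have Lw: "L w = scaleC e u + scaleC (\<mu> - lam) w"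
  proof -
    have "A w = scaleC e u + scaleC \<mu> w" using wA by (simp add: diff_eq_eq)
    thus ?thesis by (simp add: L_def scaleC_diff_left algebra_simps)
  qed
  have wM: "norm w \<le> M"
  proof -
    have "c * norm w \<le> norm (L w)" using c(2) wD by blast
    also have "\<dots> \<le> norm (scaleC e u) + norm (scaleC (\<mu> - lam) w)" unfolding Lw by (rule norm_triangle_ineq)
    also have "\<dots> = 1 + t * norm w" using e1 u(2) cmu by (simp add: norm_scaleC)
    finally have "(c - t) * norm w \<le> 1" by (simp add: algebra_simps)
    moreover have "c / 2 * norm w \<le> (c - t) * norm w" using t1 by (intro mult_right_mono) auto
    ultimately have "c / 2 * norm w \<le> 1" by linarith
    thus ?thesis using c(1) by (simp add: M_def field_simps)
  qed
  define a where "a = cinner (L u) w / e"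
  define b where "b = cinner (L w) u / e"
  define d where "d = cinner (L w) w / e"
  have beq: "b = 1 + (\<mu> - lam) / e * cinner w u"
    using e0 uu by (simp add: b_def Lw cinner_add_left cinner_scaleC_left add_divide_distrib)
  have cwu: "cmod (cinner w u) \<le> M" using cauchy_schwarz_c[of w u] u(2) wM by simp
  have cuw: "cmod (cinner u w) \<le> M" using cauchy_schwarz_c[of u w] u(2) wM by simp
  have bb: "cmod (b - 1) \<le> t * M"
  proof -
    have "cmod (b - 1) = t * cmod (cinner w u)" using tpos by (simp add: beq mul norm_mult)
    also have "\<dots> \<le> t * M" using cwu tpos by (simp add: mult_left_mono)
    finally show ?thesis .
  qed
  have deq: "d = cinner u w + (\<mu> - lam) / e * cinner w w"
    using e0 by (simp add: d_def Lw cinner_add_left cinner_scaleC_left add_divide_distrib)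
  have db: "cmod d \<le> R0"
  proof -
    have "cmod d \<le> cmod (cinner u w) + cmod ((\<mu> - lam) / e * cinner w w)"
      unfolding deq by (rule norm_triangle_ineq)
    also have "cmod ((\<mu> - lam) / e * cinner w w) = t * (norm w)^2"
      using tpos by (simp add: mul norm_mult cinner_self norm_power)
    also have "t * (norm w)^2 \<le> 1 * M^2"
      using t1 tpos wM by (intro mult_mono power_mono) auto
    finally show ?thesis using cuw by (simp add: R0_def)
  qed
  have vD: "u + scaleC \<zeta> w \<in> D" for \<zeta> using lin(2,3) u(1) wD by blast
  have qexp: "q (u + scaleC \<zeta> w) = z0 + cnj \<zeta> * a + \<zeta> * b + \<zeta> * cnj \<zeta> * d" for \<zeta>
  proof -
    have "L (u + scaleC \<zeta> w) = L u + scaleC \<zeta> (L w)"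
      using u(1) wD lin(3) by (simp add: L_add L_scale)
    hence "q (u + scaleC \<zeta> w) = (cinner (L u) u + cnj \<zeta> * cinner (L u) w + \<zeta> * cinner (L w) u
        + \<zeta> * cnj \<zeta> * cinner (L w) w) / e"
      by (simp add: q_def cinner_expand)
    thus ?thesis by (simp add: z0_def q_def a_def b_def d_def add_divide_distrib)
  qed
  have h1: "\<forall>s\<in>{t,-t}. 0 \<le> Im z0 + s * Im (a + b) + s^2 * Im d"
  proof
    fix s :: real assume "s \<in> {t, -t}"
    have "0 \<le> Im (q (u + scaleC (complex_of_real s) w))" using Imq vD by blast
    thus "0 \<le> Im z0 + s * Im (a + b) + s^2 * Im d"
      unfolding qexp by (simp add: power2_eq_square algebra_simps)
  qed
  have h2: "\<forall>s\<in>{t,-t}. 0 \<le> Im z0 + s * (Re b - Re a) + s^2 * Im d"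
  proof
    fix s :: real assume "s \<in> {t, -t}"
    have "0 \<le> Im (q (u + scaleC (\<i> * complex_of_real s) w))" using Imq vD by blast
    thus "0 \<le> Im z0 + s * (Re b - Re a) + s^2 * Im d"
      unfolding qexp by (simp add: power2_eq_square algebra_simps)
  qed
  define v where "v = u + scaleC (complex_of_real (\<sigma> * t)) w"
  define Q where "Q = z0 + complex_of_real (\<sigma> * t) * (a + b) + complex_of_real (t^2) * d"
  have s2: "\<sigma> * \<sigma> = 1" using sig by auto
  have qv: "q v = Q"
  proof -
    have "q v = z0 + complex_of_real (\<sigma> * t) * a + complex_of_real (\<sigma> * t) * b
        + complex_of_real (\<sigma> * t * (\<sigma> * t)) * d"
      unfolding v_def qexp by simp
    also have "\<sigma> * t * (\<sigma> * t) = t^2" using s2 by (simp add: power2_eq_square algebra_simps)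
    finally show ?thesis by (simp add: Q_def algebra_simps)
  qed
  have core: "t \<le> \<sigma> * Re Q" "Im Q \<le> (2 + 2 * R0) * t^2" "\<bar>Re Q\<bar> \<le> 3 * t"
    using core_num[OF sig tpos t1(1) z0b bb db _ h1 h2 tsmall] Mpos unfolding Q_def by auto
  have ImQ: "0 \<le> Im Q" using Imq[of v] vD qv by (simp add: v_def)
  have nw: "norm (scaleC (complex_of_real (\<sigma> * t)) w) \<le> 1 / 4"
  proof -
    have "norm (scaleC (complex_of_real (\<sigma> * t)) w) = t * norm w"
      using sig tpos by (auto simp: norm_scaleC)
    also have "\<dots> \<le> t * M" using wM tpos by (simp add: mult_left_mono)
    finally show ?thesis using tM by simp
  qed
  have nv1: "3 / 4 \<le> norm v" "norm v \<le> 5 / 4"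
  proof -
    have "norm u - norm (scaleC (complex_of_real (\<sigma> * t)) w) \<le> norm v"
      unfolding v_def by (metis norm_diff_ineq diff_minus_eq_add)
    thus "3 / 4 \<le> norm v" using nw u(2) by simp
    have "norm v \<le> norm u + norm (scaleC (complex_of_real (\<sigma> * t)) w)"
      unfolding v_def by (rule norm_triangle_ineq)
    thus "norm v \<le> 5 / 4" using nw u(2) by simp
  qed
  define N where "N = (norm v)^2"
  have N: "1 / 2 \<le> N" "N \<le> 3"
  proof -
    have "(3/4)^2 \<le> N" unfolding N_def using nv1 by (intro power_mono) auto
    thus "1 / 2 \<le> N" by (simp add: power2_eq_square)
    have "N \<le> (5/4)^2" unfolding N_def using nv1 by (intro power_mono) auto
    thus "N \<le> 3" by (simp add: power2_eq_square)
  qed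
  have vnz: "v \<noteq> 0" using nv1 by auto
  obtain z where z: "z \<in> num_range D A" "(z - lam) / e = Q / complex_of_real N"
    using numpt[of v] vD vnz qv by (auto simp: v_def N_def)
  have "z \<in> \<Omega>" using z(1) closure_subset unfolding \<Omega>_def by blast
  obtain w' where w': "lam + e * w' \<in> frontier \<Omega>" "Re w' = Re Q / N" "0 \<le> Im w'" "Im w' \<le> Im Q / N"
    using frontier_below[of \<Omega> e lam z] \<open>z \<in> \<Omega>\<close> e1 half z(2)
    by (auto simp: \<Omega>_def Re_divide_of_real Im_divide_of_real)
  have Npos: "N > 0" using N by simp
  have "t / N \<le> \<sigma> * Re Q / N" using core(1) Npos by (simp add: divide_right_mono)
  moreover have "0 < t / N" using tpos Npos by simp
  ultimately have "0 < \<sigma> * Re Q / N" by linarith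
  hence pos: "0 < \<sigma> * Re w'" using w'(2) by simp
  have "cmod w' \<le> \<bar>Re w'\<bar> + \<bar>Im w'\<bar>" by (rule cmod_le)
  also have "\<dots> \<le> 3 * t / N + (2 + 2 * R0) * t^2 / N"
  proof -
    have "\<bar>Re w'\<bar> \<le> 3 * t / N" using w'(2) core(3) Npos by (simp add: abs_divide divide_right_mono)
    moreover have "Im Q / N \<le> (2 + 2 * R0) * t^2 / N" using core(2) Npos by (simp add: divide_right_mono)
    ultimately show ?thesis using w'(3,4) by simp
  qed
  also have "\<dots> \<le> 3 * t / (1/2) + (2 + 2 * R0) * t^2 / (1/2)"
    using N tpos R0pos by (intro add_mono divide_left_mono) auto
  also have "\<dots> \<le> (10 + 4 * R0) * t"
  proof -
    have "t^2 \<le> t" using tpos t1 by (simp add: power2_eq_square mult_left_le_one_le)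
    hence "(2 + 2 * R0) * t^2 \<le> (2 + 2 * R0) * t" using R0pos by (intro mult_left_mono) auto
    thus ?thesis by (simp add: algebra_simps)
  qed
  also have "\<dots> \<le> \<delta>" by (rule tdelta)
  finally have cw: "cmod w' \<le> \<delta>" .
  have big: "6 * (1 + R0) < Im w' / (Re w')^2" using \<delta>(2)[OF w'(1) cw pos] .
  have ReQ2: "t^2 \<le> (Re Q)^2"
  proof -
    have "t \<le> \<bar>Re Q\<bar>" using core(1) sig by auto
    hence "t^2 \<le> \<bar>Re Q\<bar>^2" using tpos by (intro power_mono) auto
    thus ?thesis by simp
  qed
  have Rw2: "(Re w')^2 = (Re Q)^2 / N^2" using w'(2) by (simp add: power_divide)
  have Rpos: "0 < (Re Q)^2" using ReQ2 tpos by (meson less_le_trans zero_less_power)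
  have "Im w' / (Re w')^2 \<le> (Im Q / N) / (Re w')^2"
    using w'(4) Rpos Npos Rw2 by (intro divide_right_mono) auto
  also have "\<dots> = Im Q * N / (Re Q)^2" unfolding Rw2 using Npos Rpos by (simp add: field_simps power2_eq_square)
  also have "\<dots> \<le> ((2 + 2 * R0) * t^2 * 3) / (Re Q)^2"
    using core(2) N ImQ Rpos by (intro divide_right_mono mult_mono) auto
  also have "\<dots> \<le> ((2 + 2 * R0) * t^2 * 3) / t^2"
    using ReQ2 tpos R0pos Rpos by (intro divide_left_mono) auto
  also have "\<dots> = 6 * (1 + R0)" using tpos by (simp add: field_simps)
  finally show False using big by simp
qed

end
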